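(* Let $L$ be a finitely additive expectation on a linear space $\mathcal{L}=\{X_i:i\in I\}$ of real-valued functions on $\Omega$ containing all constants. Then the collection of marginal previsions $P(X_i)=L(X_i)$, $i\in I$, is coherent$_1$.
   Context: Random variables are real-valued functions on a nonempty set $\Omega$. A finitely additive expectation on a linear space $\mathcal{L}$ containing all constants is a map $L:\mathcal{L}\to\mathbb{R}\cup\{\pm\infty\}$ that is nonnegative ($X\le Y$ implies $L(X)\le L(Y)$), extended-linear ($L(\alpha X+\beta Y)=\alpha L(X)+\beta L(Y)$ for all real $\alpha,\beta$ whenever the right side is not of the form $\infty-\infty$, with $0\times(\pm\infty)=0$), and satisfies $L(1)=1$. Coherence$_1$ (marginal case): $\{P(X_i):i\in I\}$ is coherent$_1$ if for every finite $\{i_1,\dots,i_n\}\subseteq I$, all real $\alpha_1,\dots,\alpha_n$ with $\alpha_j\ge0$ whenever $P(X_{i_j})=+\infty$ and $\alpha_j\le0$ whenever $P(X_{i_j})=-\infty$, and all real $c_1,\dots,c_n$ with $c_j=P(X_{i_j})$ whenever it is finite, $\sup_\omega\sum_{j=1}^n\alpha_j[X_{i_j}(\omega)-c_j]\ge0$. *)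

theory Defs
  imports "HOL-Library.Extended_Real"
begin

definition linear_space_with_constants :: "('a \<Rightarrow> real) set \<Rightarrow> bool" where
  "linear_space_with_constants S \<longleftrightarrow>
     (\<forall>c::real. (\<lambda>_. c) \<in> S) \<and>
     (\<forall>X\<in>S. \<forall>Y\<in>S. \<forall>a b::real. (\<lambda>w. a * X w + b * Y w) \<in> S)"

definition inf_minus_inf :: "ereal \<Rightarrow> ereal \<Rightarrow> bool" where
  "inf_minus_inf u v \<longleftrightarrow> (u = \<infinity> \<and> v = -\<infinity>) \<or> (u = -\<infinity> \<and> v = \<infinity>)"

text \<open>Finitely additive expectation on S (note: in ereal, ereal 0 * (+-infinity) = 0).\<close>
definition fa_expectation :: "('a \<Rightarrow> real) set \<Rightarrow> (('a \<Rightarrow> real) \<Rightarrow> ereal) \<Rightarrow> bool" where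
  "fa_expectation S L \<longleftrightarrow>
     (\<forall>X\<in>S. \<forall>Y\<in>S. (\<forall>w. X w \<le> Y w) \<longrightarrow> L X \<le> L Y) \<and>
     (\<forall>X\<in>S. \<forall>Y\<in>S. \<forall>a b::real.
        \<not> inf_minus_inf (ereal a * L X) (ereal b * L Y) \<longrightarrow>
        L (\<lambda>w. a * X w + b * Y w) = ereal a * L X + ereal b * L Y) \<and>
     L (\<lambda>_. 1) = 1"

text \<open>Coherence_1 of the marginal previsions P i of X i, i in I.  A finite selection
  i_1..i_n of indices is given by idx on {0..<n}.\<close>
definition coherent1 :: "'i set \<Rightarrow> ('i \<Rightarrow> 'a \<Rightarrow> real) \<Rightarrow> ('i \<Rightarrow> ereal) \<Rightarrow> bool" where
  "coherent1 I X P \<longleftrightarrow>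
     (\<forall>(n::nat) (idx::nat \<Rightarrow> 'i) (\<alpha>::nat \<Rightarrow> real) (c::nat \<Rightarrow> real).
        (\<forall>j<n. idx j \<in> I) \<longrightarrow>
        (\<forall>j<n. P (idx j) = \<infinity> \<longrightarrow> \<alpha> j \<ge> 0) \<longrightarrow>
        (\<forall>j<n. P (idx j) = -\<infinity> \<longrightarrow> \<alpha> j \<le> 0) \<longrightarrow>
        (\<forall>j<n. \<bar>P (idx j)\<bar> \<noteq> \<infinity> \<longrightarrow> ereal (c j) = P (idx j)) \<longrightarrow>
        (SUP w. ereal (\<Sum>j<n. \<alpha> j * (X (idx j) w - c j))) \<ge> 0)"

end

theory Submission
  imports Defs
begin

lemma lin_const: "linear_space_with_constants S \<Longrightarrow> (\<lambda>_. c) \<in> S"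
  unfolding linear_space_with_constants_def by blast

lemma lin_comb: "linear_space_with_constants S \<Longrightarrow> X \<in> S \<Longrightarrow> Y \<in> S \<Longrightarrow> (\<lambda>w. a * X w + b * Y w) \<in> S"
  unfolding linear_space_with_constants_def by blast

lemma fa_mono: "fa_expectation S L \<Longrightarrow> X \<in> S \<Longrightarrow> Y \<in> S \<Longrightarrow> \<forall>w. X w \<le> Y w \<Longrightarrow> L X \<le> L Y"
  unfolding fa_expectation_def by blast

lemma fa_lin: "fa_expectation S L \<Longrightarrow> X \<in> S \<Longrightarrow> Y \<in> S \<Longrightarrow>
   \<not> inf_minus_inf (ereal a * L X) (ereal b * L Y) \<Longrightarrow>
        L (\<lambda>w. a * X w + b * Y w) = ereal a * L X + ereal b * L Y"
  unfolding fa_expectation_def by blast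

lemma fa_one: "fa_expectation S L \<Longrightarrow> L (\<lambda>_. 1) = 1"
  unfolding fa_expectation_def by blast

lemma const_L:
  assumes lin: "linear_space_with_constants S" and fa: "fa_expectation S L"
  shows "L (\<lambda>_. r) = ereal r"
proof -
  have one: "(\<lambda>_. 1::real) \<in> S" using lin by (rule lin_const)
  have L1: "L (\<lambda>_. 1) = 1" using fa by (rule fa_one)
  have "\<not> inf_minus_inf (ereal r * L (\<lambda>_. 1)) (ereal 0 * L (\<lambda>_. 1))"
    using L1 by (simp add: inf_minus_inf_def)
  hence "L (\<lambda>w. r * 1 + 0 * 1) = ereal r * L (\<lambda>_. 1) + ereal 0 * L (\<lambda>_. 1)"
    by (rule fa_lin[OF fa one one])
  thus ?thesis using L1 by simp
qed

lemma term_nonneg: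
  assumes lin: "linear_space_with_constants S" and fa: "fa_expectation S L"
    and Y: "Y \<in> S"
    and h1: "L Y = \<infinity> \<longrightarrow> a \<ge> 0" and h2: "L Y = -\<infinity> \<longrightarrow> a \<le> 0"
    and h3: "\<bar>L Y\<bar> \<noteq> \<infinity> \<longrightarrow> ereal c = L Y"
  shows "(\<lambda>w. a * (Y w - c)) \<in> S \<and> L (\<lambda>w. a * (Y w - c)) \<ge> 0"
proof -
  have one: "(\<lambda>_. 1::real) \<in> S" using lin by (rule lin_const)
  have L1: "L (\<lambda>_. 1) = 1" using fa by (rule fa_one)
  have eq: "(\<lambda>w. a * (Y w - c)) = (\<lambda>w. a * Y w + (- a * c) * 1)"
    by (auto simp: algebra_simps)
  have mem: "(\<lambda>w. a * Y w + (- a * c) * 1) \<in> S"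
    by (rule lin_comb[OF lin Y one])
  have ni: "\<not> inf_minus_inf (ereal a * L Y) (ereal (- a * c) * L (\<lambda>_. 1))"
    using L1 by (simp add: inf_minus_inf_def)
  hence "L (\<lambda>w. a * Y w + (- a * c) * 1) = ereal a * L Y + ereal (- a * c) * L (\<lambda>_. 1)"
    by (rule fa_lin[OF fa Y one])
  hence E: "L (\<lambda>w. a * Y w + (- a * c) * 1) = ereal a * L Y + ereal (- a * c)" using L1 by simp
  have "ereal a * L Y + ereal (- a * c) \<ge> 0"
  proof (cases "L Y")
    case (real r)
    then have "c = r" using h3 by simp
    then show ?thesis using real by simp
  next
    case PInf
    then show ?thesis using h1 by (cases "a = 0") auto
  next
    case MInf
    then show ?thesis using h2 by (cases "a = 0") auto
  qed
  thus ?thesis using eq mem E by simp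
qed

theorem lemma5p2:
  fixes I :: "'i set" and X :: "'i \<Rightarrow> 'a \<Rightarrow> real"
    and L :: "('a \<Rightarrow> real) \<Rightarrow> ereal"
  assumes "linear_space_with_constants (X ` I)"
    and "fa_expectation (X ` I) L"
  shows "coherent1 I X (\<lambda>i. L (X i))"
  unfolding coherent1_def
proof (intro allI impI)
  fix n :: nat and idx :: "nat \<Rightarrow> 'i" and \<alpha> :: "nat \<Rightarrow> real" and c :: "nat \<Rightarrow> real"
  assume A1: "\<forall>j<n. idx j \<in> I"
    and A2: "\<forall>j<n. L (X (idx j)) = \<infinity> \<longrightarrow> 0 \<le> \<alpha> j"
    and A3: "\<forall>j<n. L (X (idx j)) = - \<infinity> \<longrightarrow> \<alpha> j \<le> 0"
    and A4: "\<forall>j<n. \<bar>L (X (idx j))\<bar> \<noteq> \<infinity> \<longrightarrow> ereal (c j) = L (X (idx j))"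
  define S where "S = X ` I"
  have lin: "linear_space_with_constants S" and fa: "fa_expectation S L"
    using assms S_def by auto
  define Z where "Z k = (\<lambda>w. \<Sum>j<k. \<alpha> j * (X (idx j) w - c j))" for k
  have main: "k \<le> n \<Longrightarrow> Z k \<in> S \<and> L (Z k) \<ge> 0" for k
  proof (induction k)
    case 0
    have "Z 0 = (\<lambda>_. 0)" unfolding Z_def by simp
    moreover have "(\<lambda>_. 0::real) \<in> S" using lin by (rule lin_const)
    ultimately show ?case using const_L[OF lin fa, of 0] by simp
  next
    case (Suc k)
    have kn: "k < n" using Suc.prems by simp
    have IH1: "Z k \<in> S" and IH2: "L (Z k) \<ge> 0" using Suc.IH kn by auto
    have Y: "X (idx k) \<in> S" using A1 kn unfolding S_def by simp
    define T' where "T' = (\<lambda>w. \<alpha> k * (X (idx k) w - c k))"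
    have h1: "L (X (idx k)) = \<infinity> \<longrightarrow> 0 \<le> \<alpha> k" using A2 kn by simp
    have h2: "L (X (idx k)) = -\<infinity> \<longrightarrow> \<alpha> k \<le> 0" using A3 kn by simp
    have h3: "\<bar>L (X (idx k))\<bar> \<noteq> \<infinity> \<longrightarrow> ereal (c k) = L (X (idx k))" using A4 kn by simp
    have T: "T' \<in> S \<and> L T' \<ge> 0"
      unfolding T'_def by (rule term_nonneg[OF lin fa Y h1 h2 h3])
    have eq: "Z (Suc k) = (\<lambda>w. 1 * Z k w + 1 * T' w)"
      unfolding Z_def T'_def by (rule ext) simp
    have mem: "(\<lambda>w. 1 * Z k w + 1 * T' w) \<in> S"
      by (rule lin_comb[OF lin IH1 conjunct1[OF T]])
    have ni: "\<not> inf_minus_inf (ereal 1 * L (Z k)) (ereal 1 * L T')"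
      using IH2 T unfolding inf_minus_inf_def by auto
    have "L (\<lambda>w. 1 * Z k w + 1 * T' w) = ereal 1 * L (Z k) + ereal 1 * L T'"
      by (rule fa_lin[OF fa IH1 conjunct1[OF T] ni])
    hence "L (Z (Suc k)) = L (Z k) + L T'" unfolding eq by simp
    moreover have "L T' \<ge> 0" using T by simp
    ultimately have "L (Z (Suc k)) \<ge> 0" using IH2 by simp
    thus ?case using eq mem by simp
  qed
  hence ZS: "Z n \<in> S" and ZL: "L (Z n) \<ge> 0" by auto
  show "0 \<le> (SUP w. ereal (\<Sum>j<n. \<alpha> j * (X (idx j) w - c j)))"
  proof (rule ccontr)
    let ?s = "SUP w. ereal (\<Sum>j<n. \<alpha> j * (X (idx j) w - c j))"
    assume "\<not> 0 \<le> ?s"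
    hence neg: "?s < 0" by simp
    have le: "ereal (Z n w) \<le> ?s" for w unfolding Z_def by (rule SUP_upper) simp
    obtain w0 :: 'a where True by simp
    have "?s \<noteq> -\<infinity>" using le[of w0] by auto
    moreover have "?s \<noteq> \<infinity>" using neg by auto
    ultimately obtain r where r: "?s = ereal r" by (cases ?s) auto
    have "r < 0" using neg r by simp
    have "\<forall>w. Z n w \<le> (\<lambda>_. r) w" using le r by simp
    moreover have "(\<lambda>_. r) \<in> S" using lin by (rule lin_const)
    ultimately have "L (Z n) \<le> L (\<lambda>_. r)" using fa_mono[OF fa ZS] by blast
    hence "L (Z n) \<le> ereal r" using const_L[OF lin fa] by simp
    hence "0 \<le> ereal r" using ZL by (rule order_trans[rotated])
    thus False using \<open>r < 0\<close> by simp
  qed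
qed

end
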